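(* Let $G$ be a connected weighted multigraph on the vertex set $V$, $|V|=n\ge2$, with positive edge weights, weighted adjacency matrix $A$, spectral radius $\rho$ and Perron vector $p$. Let $d^{LW}(i,j)=\lim_{\alpha\to\infty}d^{W}_\alpha(i,j)$ be the long walk distance. Then for all distinct $i,j\in V$, $$d^{LW}(i,j)=n^{-1}\Bigl[(\rho I-B_{jj})^{-1}_i+(\rho I-B_{ii})^{-1}_j\Bigr]\mathbf 1,$$ where $B=P^{-1}AP$, $P=\operatorname{diag}p$, and $\mathbf 1$ is the vector of $n-1$ ones.
   Context: $A=(a_{ij})$ has $a_{ij}$ equal to the sum of weights of the edges joining $i$ and $j$ (loops, multiple edges allowed). The Perron vector $p$ is the positive eigenvector of $A$ for $\rho$ with entries summing to 1. For $\alpha>0$, $t=(\rho+\alpha^{-1})^{-1}$, $R_t=(I-tA)^{-1}=(r_{ij}(t))$, and $d^{W}_\alpha(i,j)=\theta\bigl(\tfrac12(\ln r_{ii}(t)+\ln r_{jj}(t))-\ln r_{ij}(t)\bigr)$ with $\theta=\ln(e+\alpha^{2/n})\frac{\alpha-1}{\ln\alpha}$ ($\theta=\ln(e+1)$ at $\alpha=1$); the limit defining $d^{LW}$ exists. Matrices are indexed by vertices; $M_{jj}$ is $M$ with row and column $j$ deleted; $N^{-1}_i$ is the row of $N^{-1}$ indexed by $i$. *)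

theory Defs
  imports "Jordan_Normal_Form.Spectral_Radius" "Jordan_Normal_Form.Gauss_Jordan_Elimination"
begin

text \<open>A weighted multigraph on the vertex set V = {0..<n}: a finite set E of edges,
  each edge e has a set of endpoints ends e (one vertex for a loop, two otherwise)
  and a weight w e.\<close>

definition wmultigraph :: "nat \<Rightarrow> 'e set \<Rightarrow> ('e \<Rightarrow> nat set) \<Rightarrow> ('e \<Rightarrow> real) \<Rightarrow> bool" where
  "wmultigraph n E ends w \<longleftrightarrow> finite E \<and>
     (\<forall>e\<in>E. ends e \<subseteq> {0..<n} \<and> 1 \<le> card (ends e) \<and> card (ends e) \<le> 2 \<and> w e > 0)"

definition adjacent :: "'e set \<Rightarrow> ('e \<Rightarrow> nat set) \<Rightarrow> (nat \<times> nat) set" where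
  "adjacent E ends = {(u, v). \<exists>e\<in>E. ends e = {u, v}}"

definition connected_graph :: "nat \<Rightarrow> 'e set \<Rightarrow> ('e \<Rightarrow> nat set) \<Rightarrow> bool" where
  "connected_graph n E ends \<longleftrightarrow> (\<forall>i<n. \<forall>j<n. (i, j) \<in> (adjacent E ends)\<^sup>*)"

definition wadj :: "nat \<Rightarrow> 'e set \<Rightarrow> ('e \<Rightarrow> nat set) \<Rightarrow> ('e \<Rightarrow> real) \<Rightarrow> real mat" where
  "wadj n E ends w = mat n n (\<lambda>(i, j). \<Sum>e\<in>{e\<in>E. ends e = {i, j}}. w e)"

definition rho :: "real mat \<Rightarrow> real" where
  "rho A = spectral_radius (map_mat complex_of_real A)"

definition perron_vec :: "real mat \<Rightarrow> real vec" where
  "perron_vec A = (THE p. p \<in> carrier_vec (dim_row A) \<and> (\<forall>i<dim_row A. p $ i > 0) \<and>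
      A *\<^sub>v p = rho A \<cdot>\<^sub>v p \<and> (\<Sum>i<dim_row A. p $ i) = 1)"

definition minv :: "real mat \<Rightarrow> real mat" where
  "minv M = the (mat_inverse M)"

definition theta :: "nat \<Rightarrow> real \<Rightarrow> real" where
  "theta n \<alpha> = (if \<alpha> = 1 then ln (exp 1 + 1)
     else ln (exp 1 + \<alpha> powr (2 / real n)) * (\<alpha> - 1) / ln \<alpha>)"

definition resolvent :: "real mat \<Rightarrow> real \<Rightarrow> real mat" where
  "resolvent A \<alpha> = (let t = 1 / (rho A + 1 / \<alpha>) in minv (1\<^sub>m (dim_row A) - t \<cdot>\<^sub>m A))"

definition dW :: "real mat \<Rightarrow> real \<Rightarrow> nat \<Rightarrow> nat \<Rightarrow> real" where
  "dW A \<alpha> i j = (let R = resolvent A \<alpha> in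
     theta (dim_row A) \<alpha> * ((ln (R $$ (i, i)) + ln (R $$ (j, j))) / 2 - ln (R $$ (i, j))))"

definition diag_of_vec :: "real vec \<Rightarrow> real mat" where
  "diag_of_vec p = mat (dim_vec p) (dim_vec p) (\<lambda>(i, j). if i = j then p $ i else 0)"

text \<open>Row of the inverse of (rho I - B) with row/column j deleted, indexed by vertex i
  (i \<noteq> j; after deletion vertex i has index delete_index j i), times the all-ones vector.\<close>
definition row_inv_del_sum :: "real mat \<Rightarrow> real \<Rightarrow> nat \<Rightarrow> nat \<Rightarrow> real" where
  "row_inv_del_sum B r j i =
     (let M = minv (mat_delete (r \<cdot>\<^sub>m 1\<^sub>m (dim_row B) - B) j j)
      in \<Sum>k<dim_row B - 1. M $$ (delete_index j i, k))"

end

theory Submission imports Defs "HOL-Analysis.Function_Topology" "HOL-Analysis.Elementary_Normed_Spaces" "HOL-Real_Asymp.Real_Asymp" begin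

unbundle no vec_syntax

lemma rayleigh_max:
  fixes a :: "nat \<Rightarrow> nat \<Rightarrow> real" and n :: nat
  assumes n: "n > 0"
  shows "\<exists>x. (\<Sum>k<n. (x k)\<^sup>2) = 1 \<and>
     (\<forall>y. (\<Sum>k<n. (y k)\<^sup>2) = 1 \<longrightarrow> (\<Sum>k<n. \<Sum>l<n. y k * a k l * y l) \<le> (\<Sum>k<n. \<Sum>l<n. x k * a k l * x l))"
proof -
  define S where "S = (\<lambda>i::nat. if i < n then {-1..1::real} else {0})"
  define K0 where "K0 = PiE UNIV S"
  define K where "K = K0 \<inter> {x. (\<Sum>k<n. (x k)\<^sup>2) = 1}"
  define Q where "Q = (\<lambda>y::nat\<Rightarrow>real. (\<Sum>k<n. \<Sum>l<n. y k * a k l * y l))"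
  have "compactin (product_topology (\<lambda>i. euclidean) UNIV) K0"
    unfolding K0_def compactin_PiE S_def by auto
  hence cK0: "compact K0" by (simp add: euclidean_product_topology)
  have "closed {x::nat\<Rightarrow>real. (\<Sum>k<n. (x k)\<^sup>2) = 1}"
    by (intro closed_Collect_eq continuous_intros) auto
  hence cK: "compact K" unfolding K_def using cK0 compact_Int_closed by blast
  define e where "e = (\<lambda>i::nat. if i = 0 then 1::real else 0)"
  have "e \<in> K" unfolding K_def K0_def S_def e_def using n
    by (auto simp: power2_eq_square if_distrib sum.delta cong: if_cong)
  hence ne: "K \<noteq> {}" by auto
  have cont: "continuous_on K Q" unfolding Q_def by (intro continuous_intros continuous_on_subset[OF continuous_on_product_coordinates]) auto
  from continuous_attains_sup[OF cK ne cont] obtain x where x: "x \<in> K" "\<forall>y\<in>K. Q y \<le> Q x" by blast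
  show ?thesis
  proof (intro exI conjI allI impI)
    show "(\<Sum>k<n. (x k)\<^sup>2) = 1" using x unfolding K_def by auto
    fix y assume y: "(\<Sum>k<n. (y k)\<^sup>2) = (1::real)"
    define y' where "y' = (\<lambda>i. if i < n then y i else 0)"
    have "y' \<in> K"
    proof -
      have "(y i)\<^sup>2 \<le> 1" if "i < n" for i
        using member_le_sum[of i "{..<n}" "\<lambda>k. (y k)\<^sup>2"] that y by auto
      hence "\<bar>y i\<bar> \<le> 1" if "i < n" for i using that abs_le_square_iff[of "y i" 1] by auto
      hence "y' \<in> K0" unfolding K0_def S_def y'_def by (force simp: abs_le_iff)
      moreover have "(\<Sum>k<n. (y' k)\<^sup>2) = 1" unfolding y'_def using y by simp
      ultimately show ?thesis unfolding K_def by auto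
    qed
    hence "Q y' \<le> Q x" using x by auto
    moreover have "Q y' = Q y" unfolding Q_def y'_def by simp
    ultimately show "(\<Sum>k<n. \<Sum>l<n. y k * a k l * y l) \<le> (\<Sum>k<n. \<Sum>l<n. x k * a k l * x l)" unfolding Q_def by simp
  qed
qed

locale symirr =
  fixes n :: nat and a :: "nat \<Rightarrow> nat \<Rightarrow> real"
  assumes n2: "n \<ge> 2"
  and sym: "\<And>k l. a k l = a l k"
  and nonneg: "\<And>k l. a k l \<ge> 0"
  and irr: "\<And>Z. Z \<subseteq> {..<n} \<Longrightarrow> Z \<noteq> {} \<Longrightarrow> (\<And>k l. k \<in> Z \<Longrightarrow> l < n \<Longrightarrow> a k l > 0 \<Longrightarrow> l \<in> Z) \<Longrightarrow> Z = {..<n}"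
begin

lemma zero_prop:
  assumes v0: "\<And>k. k < n \<Longrightarrow> v k \<ge> 0"
    and ev: "\<And>k. k < n \<Longrightarrow> (\<Sum>l<n. a k l * v l) = \<mu> * v k"
    and z: "k0 < n" "v k0 = 0"
  shows "k < n \<Longrightarrow> v k = 0"
proof -
  define Z where "Z = {k. k < n \<and> v k = 0}"
  have "Z = {..<n}"
  proof (rule irr)
    show "Z \<subseteq> {..<n}" "Z \<noteq> {}" using z unfolding Z_def by auto
    fix k l assume k: "k \<in> Z" and l: "l < n" and al: "a k l > 0"
    have "(\<Sum>l<n. a k l * v l) = 0" using ev[of k] k unfolding Z_def by auto
    moreover have "\<forall>l\<in>{..<n}. 0 \<le> a k l * v l" using v0 nonneg by auto
    ultimately have "a k l * v l = 0" using sum_nonneg_eq_0_iff[of "{..<n}" "\<lambda>l. a k l * v l"] l by auto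
    thus "l \<in> Z" using al l unfolding Z_def by auto
  qed
  thus "k < n \<Longrightarrow> v k = 0" unfolding Z_def by auto
qed

definition Qf :: "(nat \<Rightarrow> real) \<Rightarrow> real" where
  "Qf y = (\<Sum>k<n. \<Sum>l<n. y k * a k l * y l)"
definition Nf :: "(nat \<Rightarrow> real) \<Rightarrow> real" where
  "Nf y = (\<Sum>k<n. (y k)\<^sup>2)"

lemma Q_expand:
  "Qf (\<lambda>k. z k + e * h k) = Qf z + 2 * e * (\<Sum>k<n. h k * (\<Sum>l<n. a k l * z l)) + e\<^sup>2 * Qf h"
proof -
  have sw: "(\<Sum>k<n. \<Sum>l<n. z k * a k l * h l) = (\<Sum>k<n. h k * (\<Sum>l<n. a k l * z l))"
    by (subst sum.swap) (simp add: sum_distrib_left sym mult_ac)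
  have "Qf (\<lambda>k. z k + e * h k) = (\<Sum>k<n. \<Sum>l<n. z k * a k l * z l + e * (z k * a k l * h l) + e * (h k * a k l * z l) + e\<^sup>2 * (h k * a k l * h l))"
    unfolding Qf_def by (intro sum.cong refl) (simp add: algebra_simps power2_eq_square)
  also have "\<dots> = Qf z + e * (\<Sum>k<n. \<Sum>l<n. z k * a k l * h l) + e * (\<Sum>k<n. \<Sum>l<n. h k * a k l * z l) + e\<^sup>2 * Qf h"
    unfolding Qf_def by (simp add: sum.distrib sum_distrib_left)
  also have "(\<Sum>k<n. \<Sum>l<n. h k * a k l * z l) = (\<Sum>k<n. h k * (\<Sum>l<n. a k l * z l))"
    by (simp add: sum_distrib_left mult_ac)
  finally show ?thesis using sw by simp
qed

lemma N_expand:
  "Nf (\<lambda>k. z k + e * h k) = Nf z + 2 * e * (\<Sum>k<n. h k * z k) + e\<^sup>2 * Nf h"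
  unfolding Nf_def by (simp add: sum.distrib sum_distrib_left power2_eq_square algebra_simps)

lemma perron_exists:
  "\<exists>q lam. (\<forall>k<n. q k > 0) \<and> (\<forall>k<n. (\<Sum>l<n. a k l * q l) = lam * q k)"
proof -
  from rayleigh_max[of n a] n2 obtain x where x1: "Nf x = 1" and xmax: "\<And>y. Nf y = 1 \<Longrightarrow> Qf y \<le> Qf x"
    unfolding Nf_def Qf_def by auto
  define lam where "lam = Qf x"
  have bound: "Qf y \<le> lam * Nf y" for y
  proof (cases "Nf y = 0")
    case True
    have "\<forall>k\<in>{..<n}. (y k)\<^sup>2 = 0" using True unfolding Nf_def
      by (subst sum_nonneg_eq_0_iff[symmetric]) auto
    hence "Qf y = 0" unfolding Qf_def by auto
    thus ?thesis using True by simp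
  next
    case False
    have Np: "Nf y > 0" using False unfolding Nf_def by (metis sum_nonneg zero_le_power2 order_le_less)
    define c where "c = 1 / sqrt (Nf y)"
    have c2: "c\<^sup>2 * Nf y = 1" unfolding c_def using Np by (simp add: power_divide)
    have "Nf (\<lambda>k. c * y k) = c\<^sup>2 * Nf y" unfolding Nf_def by (simp add: power_mult_distrib sum_distrib_left)
    hence "Qf (\<lambda>k. c * y k) \<le> lam" using xmax c2 unfolding lam_def by simp
    moreover have "Qf (\<lambda>k. c * y k) = c\<^sup>2 * Qf y" unfolding Qf_def
      by (simp add: sum_distrib_left power2_eq_square mult_ac)
    ultimately have "c\<^sup>2 * Qf y \<le> lam * (c\<^sup>2 * Nf y)" using c2 by simp
    moreover have "c\<^sup>2 > 0" unfolding c_def using Np by simp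
    ultimately show ?thesis by (simp add: mult_ac mult_le_cancel_left_pos)
  qed
  define z where "z = (\<lambda>k. \<bar>x k\<bar>)"
  have z1: "Nf z = 1" using x1 unfolding Nf_def z_def by simp
  have "Qf x \<le> Qf z" unfolding Qf_def z_def
  proof (intro sum_mono)
    fix k l
    show "x k * a k l * x l \<le> \<bar>x k\<bar> * a k l * \<bar>x l\<bar>" for l
    proof -
      have "x k * a k l * x l \<le> \<bar>x k * a k l * x l\<bar>" by simp
      also have "\<dots> = \<bar>x k\<bar> * a k l * \<bar>x l\<bar>" using nonneg[of k l] by (simp add: abs_mult)
      finally show ?thesis .
    qed
  qed
  hence zQ: "Qf z = lam" using bound[of z] z1 unfolding lam_def by simp
  define h where "h = (\<lambda>k. (\<Sum>l<n. a k l * z l) - lam * z k)"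
  have Nh: "Nf h \<le> e * (lam * Nf h - Qf h) / 2" if e: "e > 0" for e
  proof -
    have "Qf (\<lambda>k. z k + e * h k) \<le> lam * Nf (\<lambda>k. z k + e * h k)" by (rule bound)
    also have "(\<Sum>k<n. h k * (\<Sum>l<n. a k l * z l)) - lam * (\<Sum>k<n. h k * z k) = Nf h"
      unfolding Nf_def h_def by (simp add: power2_eq_square sum_distrib_left sum_subtractf algebra_simps)
    ultimately have "2 * e * Nf h + e\<^sup>2 * Qf h \<le> lam * (e\<^sup>2 * Nf h)"
      unfolding Q_expand N_expand zQ z1 by (simp add: algebra_simps)
    hence "2 * e * Nf h \<le> e * (e * (lam * Nf h - Qf h))" by (simp add: algebra_simps power2_eq_square)
    hence "2 * Nf h \<le> e * (lam * Nf h - Qf h)" using e by (simp add: mult_le_cancel_left_pos)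
    thus ?thesis by simp
  qed
  have "Nf h \<le> 0"
  proof (rule ccontr)
    assume "\<not> Nf h \<le> 0"
    hence pos: "Nf h > 0" by simp
    define C where "C = \<bar>lam * Nf h - Qf h\<bar> + 1"
    have Cp: "C > 0" unfolding C_def by simp
    define e where "e = Nf h / C"
    have ep: "e > 0" unfolding e_def using pos Cp by simp
    have "Nf h \<le> e * (lam * Nf h - Qf h) / 2" using Nh[OF ep] .
    also have "\<dots> \<le> e * C / 2" using ep unfolding C_def by (intro divide_right_mono mult_left_mono) auto
    also have "\<dots> = Nf h / 2" unfolding e_def using Cp by simp
    finally show False using pos by simp
  qed
  hence "\<forall>k\<in>{..<n}. (h k)\<^sup>2 = 0" unfolding Nf_def
    by (subst sum_nonneg_eq_0_iff[symmetric]) (auto intro!: antisym sum_nonneg)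
  hence ev: "\<And>k. k < n \<Longrightarrow> (\<Sum>l<n. a k l * z l) = lam * z k" unfolding h_def by auto
  have zpos: "z k > 0" if k: "k < n" for k
  proof (rule ccontr)
    assume "\<not> z k > 0"
    hence "z k = 0" unfolding z_def by simp
    from zero_prop[of z lam k, OF _ ev k this] have "\<And>k. k < n \<Longrightarrow> z k = 0" unfolding z_def by auto
    hence "Nf z = 0" unfolding Nf_def by simp
    thus False using z1 by simp
  qed
  show ?thesis by (rule exI[of _ z], rule exI[of _ lam]) (use zpos ev in auto)
qed

end

locale perron = symirr +
  fixes p :: "nat \<Rightarrow> real" and lam :: real
  assumes ppos: "\<And>k. k < n \<Longrightarrow> p k > 0"
  and pev: "\<And>k. k < n \<Longrightarrow> (\<Sum>l<n. a k l * p l) = lam * p k"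
begin

lemma p_nonneg: "k < n \<Longrightarrow> p k \<ge> 0" using ppos[of k] by simp

lemma spec_bound:
  fixes v :: "nat \<Rightarrow> 'b::real_normed_field" and \<mu> :: 'b
  assumes ev: "\<And>k. k < n \<Longrightarrow> (\<Sum>l<n. of_real (a k l) * v l) = \<mu> * v k"
  and nz: "k0 < n" "v k0 \<noteq> 0"
  shows "norm \<mu> \<le> lam"
proof -
  have ineq: "norm \<mu> * norm (v k) \<le> (\<Sum>l<n. a k l * norm (v l))" if k: "k < n" for k
  proof -
    have "norm \<mu> * norm (v k) = norm (\<Sum>l<n. of_real (a k l) * v l)" using ev[OF k] by (simp add: norm_mult)
    also have "\<dots> \<le> (\<Sum>l<n. norm (of_real (a k l) * v l))" by (rule norm_sum)
    also have "\<dots> = (\<Sum>l<n. a k l * norm (v l))" using nonneg by (simp add: norm_mult)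
    finally show ?thesis .
  qed
  have "norm \<mu> * (\<Sum>k<n. p k * norm (v k)) = (\<Sum>k<n. p k * (norm \<mu> * norm (v k)))"
    by (simp add: sum_distrib_left mult_ac)
  also have "\<dots> \<le> (\<Sum>k<n. p k * (\<Sum>l<n. a k l * norm (v l)))"
    using ineq ppos by (intro sum_mono mult_left_mono) (auto intro: less_imp_le)
  also have "\<dots> = (\<Sum>k<n. \<Sum>l<n. p k * a l k * norm (v l))"
    by (simp add: sum_distrib_left sym mult_ac)
  also have "\<dots> = (\<Sum>l<n. \<Sum>k<n. p k * a l k * norm (v l))"
    by (rule sum.swap)
  also have "\<dots> = (\<Sum>l<n. norm (v l) * (\<Sum>k<n. a l k * p k))"
    by (simp add: sum_distrib_left mult_ac)
  also have "\<dots> = lam * (\<Sum>l<n. p l * norm (v l))"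
    using pev by (simp add: sum_distrib_left mult_ac)
  finally have *: "norm \<mu> * (\<Sum>k<n. p k * norm (v k)) \<le> lam * (\<Sum>k<n. p k * norm (v k))" .
  have "p k0 * norm (v k0) > 0" using nz ppos by simp
  moreover have "p k0 * norm (v k0) \<le> (\<Sum>k<n. p k * norm (v k))"
    using nz p_nonneg by (intro member_le_sum) auto
  ultimately have "(\<Sum>k<n. p k * norm (v k)) > 0" by linarith
  with * show ?thesis by (rule mult_right_le_imp_le)
qed

lemma lam_pos: "lam > 0"
proof (rule ccontr)
  assume nl: "\<not> lam > 0"
  have all0: "a k l = 0" if k: "k < n" and l: "l < n" for k l
  proof -
    have le: "(\<Sum>l<n. a k l * p l) \<le> 0" using pev[OF k] ppos[OF k] nl
      by (simp add: mult_nonpos_nonneg)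
    have nn: "\<forall>l\<in>{..<n}. 0 \<le> a k l * p l" using nonneg p_nonneg by simp
    have ge: "(\<Sum>l<n. a k l * p l) \<ge> 0" by (rule sum_nonneg) (use nn in blast)
    have "(\<Sum>l<n. a k l * p l) = 0" using le ge by linarith
    hence "\<forall>l\<in>{..<n}. a k l * p l = 0" using sum_nonneg_eq_0_iff[of "{..<n}" "\<lambda>l. a k l * p l"] nn by simp
    hence "a k l * p l = 0" using l by simp
    thus ?thesis using ppos[OF l] by simp
  qed
  have "{0} = {..<n}"
  proof (rule irr)
    show "{0} \<subseteq> {..<n}" "{0::nat} \<noteq> {}" using n2 by auto
    fix k l assume "k \<in> {0::nat}" "l < n" "a k l > 0"
    thus "l \<in> {0}" using all0[of k l] n2 by auto
  qed
  hence "1 \<in> {0::nat}" using n2 by auto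
  thus False by simp
qed

lemma uniq:
  assumes qpos: "\<And>k. k < n \<Longrightarrow> q k > 0"
  and qev: "\<And>k. k < n \<Longrightarrow> (\<Sum>l<n. a k l * q l) = lam * q k"
  shows "\<exists>c. \<forall>k<n. q k = c * p k"
proof -
  define c where "c = Min ((\<lambda>k. q k / p k) ` {..<n})"
  have fin: "finite ((\<lambda>k. q k / p k) ` {..<n})" "(\<lambda>k. q k / p k) ` {..<n} \<noteq> {}" using n2 by (auto simp: lessThan_empty_iff)
  obtain k0 where k0: "k0 < n" "c = q k0 / p k0" using Min_in[OF fin] unfolding c_def by auto
  have cle: "c \<le> q k / p k" if "k < n" for k unfolding c_def using fin that by auto
  define v where "v = (\<lambda>k. q k - c * p k)"
  have v0: "v k \<ge> 0" if "k < n" for k using cle[OF that] ppos[OF that] unfolding v_def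
    by (simp add: pos_le_divide_eq)
  have vev: "(\<Sum>l<n. a k l * v l) = lam * v k" if "k < n" for k
  proof -
    have "(\<Sum>l<n. a k l * v l) = (\<Sum>l<n. a k l * q l) - c * (\<Sum>l<n. a k l * p l)"
      unfolding v_def by (simp add: algebra_simps sum_subtractf sum_distrib_left)
    thus ?thesis using qev[OF that] pev[OF that] unfolding v_def by (simp add: algebra_simps)
  qed
  have "v k0 = 0" unfolding v_def using k0 ppos[OF k0(1)] by simp
  from zero_prop[of v lam k0, OF v0 vev k0(1) this] have "\<forall>k<n. q k = c * p k" unfolding v_def by auto
  thus ?thesis by (rule exI)
qed

definition b :: "nat \<Rightarrow> nat \<Rightarrow> real" where "b k l = a k l * p l / p k"

lemma b_nonneg: "k < n \<Longrightarrow> l < n \<Longrightarrow> b k l \<ge> 0"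
  unfolding b_def using nonneg p_nonneg by simp

lemma b_pos_iff: "k < n \<Longrightarrow> l < n \<Longrightarrow> b k l > 0 \<longleftrightarrow> a k l > 0"
proof -
  assume k: "k < n" and l: "l < n"
  have "b k l > 0 \<longleftrightarrow> a k l * p l > 0" using ppos[OF k] by (simp add: b_def zero_less_divide_iff)
  also have "\<dots> \<longleftrightarrow> a k l > 0" using ppos[OF l] by (simp add: zero_less_mult_iff)
  finally show ?thesis .
qed

lemma b_rowsum: "k < n \<Longrightarrow> (\<Sum>l<n. b k l) = lam"
  unfolding b_def using pev[of k] ppos[of k] by (simp add: sum_divide_distrib[symmetric])

end

lemma mat_vec_sum:
  assumes "A \<in> carrier_mat nr nc" "v \<in> carrier_vec nc" "i < nr"
  shows "(A *\<^sub>v v) $ i = (\<Sum>l<nc. A $$ (i, l) * v $ l)"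
  using assms by (auto simp: scalar_prod_def atLeast0LessThan intro!: sum.cong)

lemma minv_kernel:
  fixes M :: "real mat"
  assumes M: "M \<in> carrier_mat m m"
  and ker: "\<And>v. v \<in> carrier_vec m \<Longrightarrow> M *\<^sub>v v = 0\<^sub>v m \<Longrightarrow> v = 0\<^sub>v m"
  shows "M * minv M = 1\<^sub>m m \<and> minv M * M = 1\<^sub>m m \<and> minv M \<in> carrier_mat m m"
proof -
  have "det M \<noteq> 0" using det_0_iff_vec_prod_zero_field[OF M] ker by auto
  from det_non_zero_imp_unit[OF M this, of undefined]
  have U: "M \<in> Units (ring_mat TYPE(real) m undefined)" .
  have "mat_inverse M \<noteq> None" using mat_inverse(1)[OF M, of undefined] U by blast
  then obtain B where B: "mat_inverse M = Some B" by auto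
  show ?thesis using mat_inverse(2)[OF M B] B unfolding minv_def by simp
qed

lemma sum_insert_index:
  assumes j: "j < n"
  shows "(\<Sum>l\<in>{l. l < n \<and> l \<noteq> j}. g l) = (\<Sum>x<n-1. g (insert_index j x))"
proof -
  have inj: "inj_on (insert_index j) {..<n-1}" by (rule insert_index_inj_on)
  have img: "insert_index j ` {..<n-1} = {l. l < n \<and> l \<noteq> j}"
  proof (rule equalityI; rule subsetI)
    fix l assume "l \<in> insert_index j ` {..<n-1}"
    then obtain x where "x < n - 1" "l = insert_index j x" by auto
    thus "l \<in> {l. l < n \<and> l \<noteq> j}" using j unfolding insert_index_def by auto
  next
    fix l assume l: "l \<in> {l. l < n \<and> l \<noteq> j}"
    hence "l = insert_index j (delete_index j l)" by (simp add: insert_delete_index)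
    moreover have "delete_index j l < n - 1" using l j unfolding delete_index_def by auto
    ultimately show "l \<in> insert_index j ` {..<n-1}" by blast
  qed
  show ?thesis using sum.reindex[OF inj, of g] img by simp
qed

lemma insert_index_bound: "j < n \<Longrightarrow> x < n - 1 \<Longrightarrow> insert_index j x < n"
  unfolding insert_index_def by auto

lemma delete_index_bound: "j < n \<Longrightarrow> l < n \<Longrightarrow> l \<noteq> j \<Longrightarrow> delete_index j l < n - 1"
  unfolding delete_index_def by auto

context perron begin

definition D :: "nat \<Rightarrow> nat set" where "D j = {l. l < n \<and> l \<noteq> j}"

definition Lop :: "nat \<Rightarrow> real \<Rightarrow> (nat \<Rightarrow> real) \<Rightarrow> nat \<Rightarrow> real" where
  "Lop j s v k = (lam + s) * v k - (\<Sum>l\<in>D j. b k l * v l)"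

lemma D_finite: "finite (D j)" unfolding D_def by auto

lemma sum_split_j:
  assumes "j < n" shows "(\<Sum>l<n. g l) = g j + (\<Sum>l\<in>D j. g l)"
proof -
  have "{..<n} = insert j (D j)" using assms unfolding D_def by auto
  thus ?thesis using D_finite unfolding D_def by (simp add: sum.insert)
qed

lemma min_principle:
  assumes j: "j < n" and s: "s \<ge> 0"
  and L: "\<And>k. k \<in> D j \<Longrightarrow> Lop j s v k \<ge> 0"
  shows "k \<in> D j \<Longrightarrow> v k \<ge> 0"
proof (rule ccontr)
  assume kD: "k \<in> D j" and "\<not> v k \<ge> 0"
  hence vk: "v k < 0" by simp
  define m where "m = Min (v ` D j)"
  have fin: "finite (v ` D j)" "v ` D j \<noteq> {}" using D_finite kD by auto
  have mle: "m \<le> v l" if "l \<in> D j" for l unfolding m_def using fin that by auto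
  have mneg: "m < 0" using mle[OF kD] vk by simp
  obtain k0 where k0: "k0 \<in> D j" "v k0 = m" using Min_in[OF fin] unfolding m_def by auto
  define Z where "Z = {l \<in> D j. v l = m}"
  have "Z = {..<n}"
  proof (rule irr)
    show "Z \<subseteq> {..<n}" unfolding Z_def D_def by auto
    show "Z \<noteq> {}" using k0 unfolding Z_def by auto
    fix k l assume kZ: "k \<in> Z" and l: "l < n" and akl: "a k l > 0"
    have kD: "k \<in> D j" and vk: "v k = m" using kZ unfolding Z_def by auto
    have kn: "k < n" using kD unfolding D_def by auto
    have bsum: "(\<Sum>l\<in>D j. b k l) = lam - b k j" using sum_split_j[OF j, of "b k"] b_rowsum[OF kn] by simp
    have "(\<Sum>l\<in>D j. b k l * v l) = (\<Sum>l\<in>D j. b k l * (v l - m)) + m * (\<Sum>l\<in>D j. b k l)"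
      by (simp add: algebra_simps sum.distrib sum_distrib_left sum_subtractf)
    hence "Lop j s v k = s * m + m * b k j - (\<Sum>l\<in>D j. b k l * (v l - m))"
      unfolding Lop_def vk bsum by (simp add: algebra_simps)
    hence ge: "s * m + m * b k j - (\<Sum>l\<in>D j. b k l * (v l - m)) \<ge> 0" using L[OF kD] by simp
    have t1: "s * m \<le> 0" using s mneg by (simp add: mult_nonneg_nonpos)
    have bkj: "b k j \<ge> 0" using b_nonneg[OF kn j] .
    have t2: "m * b k j \<le> 0" using bkj mneg by (simp add: mult_nonpos_nonneg)
    have nn: "\<forall>l\<in>D j. b k l * (v l - m) \<ge> 0" using b_nonneg kn mle unfolding D_def by simp
    have t3: "(\<Sum>l\<in>D j. b k l * (v l - m)) \<ge> 0" using nn by (simp add: sum_nonneg)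
    have "m * b k j = 0" using ge t1 t2 t3 by linarith
    hence bj0: "b k j = 0" using mneg by simp
    have "(\<Sum>l\<in>D j. b k l * (v l - m)) = 0" using ge t1 t2 t3 by linarith
    moreover have nn': "\<And>l. l \<in> D j \<Longrightarrow> 0 \<le> b k l * (v l - m)" using nn by blast
    ultimately have z: "\<forall>l\<in>D j. b k l * (v l - m) = 0" using sum_nonneg_eq_0_iff[OF D_finite nn'] by simp
    show "l \<in> Z"
    proof (cases "l = j")
      case True
      thus ?thesis using bj0 b_pos_iff[OF kn l] akl by simp
    next
      case False
      hence lD: "l \<in> D j" using l unfolding D_def by auto
      have "b k l > 0" using b_pos_iff[OF kn l] akl by simp
      hence "v l = m" using z lD by auto
      thus ?thesis using lD unfolding Z_def by auto
    qed
  qed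
  hence "j \<in> Z" using j by auto
  thus False unfolding Z_def D_def by auto
qed

lemma Lop_diff: "Lop j s (\<lambda>l. v l - w l) k = Lop j s v k - Lop j s w k"
  unfolding Lop_def by (simp add: algebra_simps sum_subtractf)

lemma Lop_uniq:
  assumes j: "j < n" and s: "s \<ge> 0"
  and eq: "\<And>k. k \<in> D j \<Longrightarrow> Lop j s v k = Lop j s w k"
  shows "k \<in> D j \<Longrightarrow> v k = w k"
proof -
  assume k: "k \<in> D j"
  have "v k - w k \<ge> 0"
    using min_principle[OF j s, of "\<lambda>l. v l - w l" k] k eq by (simp add: Lop_diff)
  moreover have "w k - v k \<ge> 0"
    using min_principle[OF j s, of "\<lambda>l. w l - v l" k] k eq by (simp add: Lop_diff)
  ultimately show ?thesis by simp
qed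

definition Nmat :: "nat \<Rightarrow> real \<Rightarrow> real mat" where
  "Nmat j s = Matrix.mat (n-1) (n-1) (\<lambda>(x,y). (if x = y then lam + s else 0) - b (insert_index j x) (insert_index j y))"

definition lift :: "nat \<Rightarrow> real Matrix.vec \<Rightarrow> nat \<Rightarrow> real" where
  "lift j v l = (if l = j then 0 else v $ delete_index j l)"

lemma Lop_lift:
  assumes j: "j < n" and x: "x < n - 1" and v: "v \<in> carrier_vec (n-1)"
  shows "Lop j s (lift j v) (insert_index j x) = (Nmat j s *\<^sub>v v) $ x"
proof -
  have "(Nmat j s *\<^sub>v v) $ x = (\<Sum>y<n-1. ((if x = y then lam + s else 0) - b (insert_index j x) (insert_index j y)) * v $ y)"
    by (subst mat_vec_sum[of _ "n-1" "n-1"]) (use x v in \<open>auto simp: Nmat_def intro!: sum.cong\<close>)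
  also have "\<dots> = (\<Sum>y<n-1. (if y = x then (lam + s) * v $ x else 0)) - (\<Sum>y<n-1. b (insert_index j x) (insert_index j y) * v $ y)"
    unfolding sum_subtractf[symmetric] by (intro sum.cong refl) (auto simp: left_diff_distrib)
  also have "(\<Sum>y<n-1. (if y = x then (lam + s) * v $ x else 0)) = (lam + s) * v $ x"
    using x by (simp add: sum.delta)
  also have "(\<Sum>y<n-1. b (insert_index j x) (insert_index j y) * v $ y) =
       (\<Sum>l\<in>D j. b (insert_index j x) l * lift j v l)"
    unfolding D_def sum_insert_index[OF j] lift_def by simp
  finally show ?thesis unfolding Lop_def lift_def by simp
qed

lemma Nmat_carrier: "Nmat j s \<in> carrier_mat (n-1) (n-1)" unfolding Nmat_def by simp

lemma Nmat_inv:
  assumes j: "j < n" and s: "s \<ge> 0"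
  shows "Nmat j s * minv (Nmat j s) = 1\<^sub>m (n-1) \<and> minv (Nmat j s) * Nmat j s = 1\<^sub>m (n-1)
     \<and> minv (Nmat j s) \<in> carrier_mat (n-1) (n-1)"
proof (rule minv_kernel[OF Nmat_carrier])
  fix v assume v: "v \<in> carrier_vec (n-1)" and Nv: "Nmat j s *\<^sub>v v = 0\<^sub>v (n-1)"
  have L0: "Lop j s (lift j v) k = Lop j s (\<lambda>_. 0) k" if k: "k \<in> D j" for k
  proof -
    have kk: "k = insert_index j (delete_index j k)" using k unfolding D_def by (simp add: insert_delete_index)
    have dk: "delete_index j k < n - 1" using k j delete_index_bound unfolding D_def by auto
    have "Lop j s (lift j v) k = (Nmat j s *\<^sub>v v) $ delete_index j k"
      using Lop_lift[OF j dk v] kk by simp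
    thus ?thesis using Nv dk unfolding Lop_def by simp
  qed
  show "v = 0\<^sub>v (n-1)"
  proof (intro eq_vecI)
    fix x assume "x < dim_vec (0\<^sub>v (n-1) :: real Matrix.vec)"
    hence x: "x < n - 1" by simp
    have xD: "insert_index j x \<in> D j" using insert_index_bound[OF j x] unfolding D_def by simp
    have "lift j v (insert_index j x) = 0" using Lop_uniq[OF j s L0 xD] .
    thus "v $ x = 0\<^sub>v (n-1) $ x" using x unfolding lift_def by simp
  qed (use v in simp)
qed

definition sol :: "nat \<Rightarrow> real \<Rightarrow> (nat \<Rightarrow> real) \<Rightarrow> nat \<Rightarrow> real" where
  "sol j s f = lift j (minv (Nmat j s) *\<^sub>v Matrix.vec (n-1) (\<lambda>x. f (insert_index j x)))"

lemma sol_j: "sol j s f j = 0" unfolding sol_def lift_def by simp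

lemma sol_eq:
  assumes j: "j < n" and s: "s \<ge> 0" and k: "k \<in> D j"
  shows "Lop j s (sol j s f) k = f k"
proof -
  note NI = Nmat_inv[OF j s]
  define fv where "fv = Matrix.vec (n-1) (\<lambda>x. f (insert_index j x))"
  have fv: "fv \<in> carrier_vec (n-1)" unfolding fv_def by simp
  have cv: "minv (Nmat j s) *\<^sub>v fv \<in> carrier_vec (n-1)" using NI fv by auto
  have kk: "k = insert_index j (delete_index j k)" using k unfolding D_def by (simp add: insert_delete_index)
  have dk: "delete_index j k < n - 1" using k j delete_index_bound unfolding D_def by auto
  have "Lop j s (sol j s f) k = (Nmat j s *\<^sub>v (minv (Nmat j s) *\<^sub>v fv)) $ delete_index j k"
    using Lop_lift[OF j dk cv] kk unfolding sol_def fv_def by simp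
  also have "Nmat j s *\<^sub>v (minv (Nmat j s) *\<^sub>v fv) = fv"
    using NI fv Nmat_carrier[of j s]
    by (metis assoc_mult_mat_vec one_mult_mat_vec)
  finally show ?thesis using dk kk unfolding fv_def by simp
qed

end

context perron begin

lemma Lop_lin: "Lop j s (\<lambda>l. c1 * v l + c2 * w l) k = c1 * Lop j s v k + c2 * Lop j s w k"
  unfolding Lop_def by (simp add: algebra_simps sum.distrib sum_distrib_left)

lemma Lop_shift: "Lop j s v k = Lop j 0 v k + s * v k"
  unfolding Lop_def by (simp add: algebra_simps)

lemma sol_nonneg:
  assumes j: "j < n" and s: "s \<ge> 0" and f: "\<And>k. k \<in> D j \<Longrightarrow> f k \<ge> 0" and k: "k \<in> D j"
  shows "sol j s f k \<ge> 0"
  using min_principle[OF j s, of "sol j s f" k] sol_eq[OF j s] f k by simp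

definition U :: "nat \<Rightarrow> real \<Rightarrow> nat \<Rightarrow> real" where "U j s = sol j s (\<lambda>_. 1)"

definition Cb :: "nat \<Rightarrow> real" where "Cb j = (\<Sum>l\<in>D j. U j 0 l)"

lemma U_nonneg: "j < n \<Longrightarrow> s \<ge> 0 \<Longrightarrow> k \<in> D j \<Longrightarrow> U j s k \<ge> 0"
  unfolding U_def by (rule sol_nonneg) auto

lemma U_le_Cb: "j < n \<Longrightarrow> k \<in> D j \<Longrightarrow> U j 0 k \<le> Cb j"
  unfolding Cb_def using U_nonneg[of j 0] by (intro member_le_sum D_finite) auto

lemma U_bound:
  assumes j: "j < n" and s: "s \<ge> 0" and k: "k \<in> D j"
  shows "\<bar>U j s k - U j 0 k\<bar> \<le> s * (Cb j)\<^sup>2"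
proof -
  define U0 where "U0 = U j 0"
  define Us where "Us = U j s"
  define W where "W = sol j s U0"
  define C where "C = Cb j"
  have U0nn: "\<And>l. l \<in> D j \<Longrightarrow> U0 l \<ge> 0" unfolding U0_def using U_nonneg[OF j] by simp
  have LU0: "Lop j s U0 l = 1 + s * U0 l" if "l \<in> D j" for l
    using Lop_shift[of j s U0 l] sol_eq[OF j _ that, of 0 "\<lambda>_. 1"] unfolding U0_def U_def by simp
  have LUs: "Lop j s Us l = 1" if "l \<in> D j" for l using sol_eq[OF j s that] unfolding Us_def U_def by simp
  have LW: "Lop j s W l = U0 l" if "l \<in> D j" for l using sol_eq[OF j s that] unfolding W_def by simp
  have Wnn: "W l \<ge> 0" if "l \<in> D j" for l unfolding W_def using sol_nonneg[OF j s U0nn that] .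
  have e1: "Us l - U0 l + s * W l = 0" if l: "l \<in> D j" for l
  proof -
    have "Lop j s (\<lambda>l. 1 * (Us l - U0 l) + s * W l) m = Lop j s (\<lambda>_. 0) m" if "m \<in> D j" for m
      unfolding Lop_lin Lop_diff using LU0[OF that] LUs[OF that] LW[OF that]
      by (simp add: Lop_def)
    from Lop_uniq[OF j s this l] show ?thesis by simp
  qed
  have CU: "C * U0 l - W l \<ge> 0" if l: "l \<in> D j" for l
  proof -
    have "Lop j s (\<lambda>l. C * U0 l + (-1) * W l) m \<ge> 0" if m: "m \<in> D j" for m
    proof -
      have "Lop j s (\<lambda>l. C * U0 l + (-1) * W l) m = C * (1 + s * U0 m) - U0 m"
        unfolding Lop_lin using LU0[OF m] LW[OF m] by simp
      moreover have "U0 m \<le> C" using U_le_Cb[OF j m] unfolding U0_def C_def .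
      moreover have "C * (s * U0 m) \<ge> 0" using U0nn[OF m] s U_le_Cb[OF j m] unfolding U0_def C_def
        by (metis mult_nonneg_nonneg order_trans)
      ultimately show ?thesis by (simp add: algebra_simps)
    qed
    from min_principle[OF j s this l] show ?thesis by simp
  qed
  have d: "Us k - U0 k = - (s * W k)" using e1[OF k] by linarith
  have "s * W k \<ge> 0" using Wnn[OF k] s by simp
  hence "\<bar>Us k - U0 k\<bar> = s * W k" unfolding d by simp
  also have "\<dots> \<le> s * (C * U0 k)" using CU[OF k] s by (intro mult_left_mono) auto
  also have "\<dots> \<le> s * (C * C)" using U_le_Cb[OF j k] s U0nn[OF k]
    unfolding U0_def C_def by (intro mult_left_mono) (auto intro: mult_left_mono order_trans)
  finally show ?thesis unfolding Us_def U0_def C_def by (simp add: power2_eq_square)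
qed

lemma U_tendsto:
  assumes j: "j < n" and k: "k \<in> D j"
  shows "((\<lambda>x. U j (1 / x) k) \<longlongrightarrow> U j 0 k) at_top"
proof -
  have "((\<lambda>x. U j (1 / x) k - U j 0 k) \<longlongrightarrow> 0) at_top"
  proof (rule Lim_null_comparison)
    show "\<forall>\<^sub>F x in at_top. norm (U j (1 / x) k - U j 0 k) \<le> (Cb j)\<^sup>2 / x"
      using eventually_gt_at_top[of 0]
    proof eventually_elim
      case (elim x)
      thus ?case using U_bound[OF j _ k, of "1/x"] by simp
    qed
    have i: "((\<lambda>x. 1 / x :: real) \<longlongrightarrow> 0) at_top" by real_asymp
    show "((\<lambda>x. (Cb j)\<^sup>2 / x) \<longlongrightarrow> 0) at_top"
      using tendsto_mult[OF tendsto_const i, of "(Cb j)\<^sup>2"] by simp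
  qed
  thus ?thesis by (simp add: LIM_zero_iff)
qed

end

lemma vec_nz:
  fixes v :: "real Matrix.vec"
  assumes v: "v \<in> carrier_vec n" and nz: "v \<noteq> 0\<^sub>v n"
  shows "\<exists>k<n. v $ k \<noteq> 0"
proof (rule ccontr)
  assume "\<not> (\<exists>k<n. v $ k \<noteq> 0)"
  hence "v = 0\<^sub>v n" using v by (intro eq_vecI) auto
  thus False using nz by simp
qed

locale perron_mat = perron +
  fixes Am :: "real mat"
  assumes Am_carrier: "Am \<in> carrier_mat n n"
  and Am_entry: "\<And>k l. k < n \<Longrightarrow> l < n \<Longrightarrow> Am $$ (k, l) = a k l"
begin

definition Tm :: "real \<Rightarrow> real mat" where "Tm s = 1\<^sub>m n - (1 / (lam + s)) \<cdot>\<^sub>m Am"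

lemma Tm_carrier: "Tm s \<in> carrier_mat n n" unfolding Tm_def using Am_carrier by auto

lemma Tm_entry: "k < n \<Longrightarrow> l < n \<Longrightarrow> Tm s $$ (k, l) = (if k = l then 1 else 0) - a k l / (lam + s)"
  unfolding Tm_def using Am_carrier Am_entry by auto

lemma Tm_vec: "v \<in> carrier_vec n \<Longrightarrow> k < n \<Longrightarrow>
    (Tm s *\<^sub>v v) $ k = v $ k - (\<Sum>l<n. a k l * v $ l) / (lam + s)"
proof -
  assume v: "v \<in> carrier_vec n" and k: "k < n"
  have "(Tm s *\<^sub>v v) $ k = (\<Sum>l<n. Tm s $$ (k, l) * v $ l)" by (rule mat_vec_sum[OF Tm_carrier v k])
  also have "\<dots> = (\<Sum>l<n. (if l = k then v $ k else 0)) - (\<Sum>l<n. a k l * v $ l / (lam + s))"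
    unfolding sum_subtractf[symmetric] by (intro sum.cong refl) (use k in \<open>auto simp: Tm_entry left_diff_distrib\<close>)
  also have "\<dots> = v $ k - (\<Sum>l<n. a k l * v $ l) / (lam + s)"
    using k by (simp add: sum.delta sum_divide_distrib)
  finally show ?thesis .
qed

lemma Tm_inv:
  assumes s: "s > 0"
  shows "Tm s * minv (Tm s) = 1\<^sub>m n \<and> minv (Tm s) * Tm s = 1\<^sub>m n \<and> minv (Tm s) \<in> carrier_mat n n"
proof (rule minv_kernel[OF Tm_carrier])
  fix v :: "real Matrix.vec" assume v: "v \<in> carrier_vec n" and Tv: "Tm s *\<^sub>v v = 0\<^sub>v n"
  have ls: "lam + s > 0" using lam_pos s by simp
  have ev: "(\<Sum>l<n. of_real (a k l) * v $ l) = (lam + s) * v $ k" if k: "k < n" for k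
  proof -
    have "v $ k - (\<Sum>l<n. a k l * v $ l) / (lam + s) = 0" using Tm_vec[OF v k, of s] Tv k by simp
    thus ?thesis using ls by (simp add: field_simps)
  qed
  show "v = 0\<^sub>v n"
  proof (rule ccontr)
    assume "v \<noteq> 0\<^sub>v n"
    then obtain k0 where k0: "k0 < n" "v $ k0 \<noteq> 0" using vec_nz[OF v] by blast
    from spec_bound[of "\<lambda>l. v $ l" "lam + s" k0] ev k0 have "norm (lam + s) \<le> lam" by simp
    thus False using ls s by simp
  qed
qed

definition Rm :: "real \<Rightarrow> real mat" where "Rm s = minv (Tm s)"

lemma Rm_sym:
  assumes s: "s > 0" and i: "i < n" and j: "j < n"
  shows "Rm s $$ (i, j) = Rm s $$ (j, i)"
proof -
  note TI = Tm_inv[OF s]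
  have R: "Rm s \<in> carrier_mat n n" using TI unfolding Rm_def by simp
  have T: "Tm s \<in> carrier_mat n n" by (rule Tm_carrier)
  have Tt: "transpose_mat (Tm s) = Tm s"
    by (rule eq_matI) (use T in \<open>auto simp: Tm_entry sym\<close>)
  have "transpose_mat (Rm s) * Tm s = transpose_mat (Tm s * Rm s)"
    using transpose_mult[OF T R] Tt by simp
  also have "\<dots> = 1\<^sub>m n" using TI unfolding Rm_def by simp
  finally have RT: "transpose_mat (Rm s) * Tm s = 1\<^sub>m n" .
  have Rt: "transpose_mat (Rm s) \<in> carrier_mat n n" using R by simp
  have TR1: "Tm s * Rm s = 1\<^sub>m n" using TI unfolding Rm_def by simp
  have "transpose_mat (Rm s) = transpose_mat (Rm s) * (Tm s * Rm s)"
    unfolding TR1 using Rt by (simp add: right_mult_one_mat)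
  also have "\<dots> = (transpose_mat (Rm s) * Tm s) * Rm s"
    using Rt T R by (simp add: assoc_mult_mat)
  also have "\<dots> = Rm s" using RT R by simp
  finally have "transpose_mat (Rm s) = Rm s" .
  hence "transpose_mat (Rm s) $$ (i, j) = Rm s $$ (i, j)" by simp
  thus ?thesis using R i j by simp
qed

lemma Rm_col:
  assumes s: "s > 0" and j: "j < n" and i: "i < n"
  and y: "y \<in> carrier_vec n" and Ty: "Tm s *\<^sub>v y = unit_vec n j"
  shows "Rm s $$ (i, j) = y $ i"
proof -
  note TI = Tm_inv[OF s]
  have R: "Rm s \<in> carrier_mat n n" using TI unfolding Rm_def by simp
  have "Rm s *\<^sub>v (Tm s *\<^sub>v y) = (Rm s * Tm s) *\<^sub>v y" using assoc_mult_mat_vec[OF R Tm_carrier y] by simp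
  also have "\<dots> = y" using TI y unfolding Rm_def by simp
  finally have "Rm s *\<^sub>v unit_vec n j = y" using Ty by simp
  hence "(Rm s *\<^sub>v unit_vec n j) $ i = y $ i" by simp
  moreover have "(Rm s *\<^sub>v unit_vec n j) $ i = Rm s $$ (i, j)"
    using R i j by (subst mat_vec_sum[OF R]) (auto simp: if_distrib sum.delta cong: if_cong)
  ultimately show ?thesis by simp
qed

definition cc :: "nat \<Rightarrow> real \<Rightarrow> real" where
  "cc j s = (lam + s) / (s * (p j + (\<Sum>l<n. a j l * p l * U j s l)))"

definition yv :: "nat \<Rightarrow> real \<Rightarrow> real Matrix.vec" where
  "yv j s = Matrix.vec n (\<lambda>k. cc j s * p k * (1 - s * U j s k))"

lemma U_j: "U j s j = 0" unfolding U_def by (rule sol_j)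

lemma S_nonneg: "j < n \<Longrightarrow> s \<ge> 0 \<Longrightarrow> (\<Sum>l<n. a j l * p l * U j s l) \<ge> 0"
proof -
  assume j: "j < n" and s: "s \<ge> 0"
  show ?thesis
  proof (rule sum_nonneg)
    fix l assume l: "l \<in> {..<n}"
    have "U j s l \<ge> 0"
    proof (cases "l = j")
      case True thus ?thesis by (simp add: U_j)
    next
      case False thus ?thesis using U_nonneg[OF j s] l unfolding D_def by auto
    qed
    thus "a j l * p l * U j s l \<ge> 0" using nonneg p_nonneg l by simp
  qed
qed

lemma cc_pos: "j < n \<Longrightarrow> s > 0 \<Longrightarrow> cc j s > 0"
  unfolding cc_def using S_nonneg[of j s] ppos[of j] lam_pos
  by (intro divide_pos_pos mult_pos_pos) auto

lemma bsum_U: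
  assumes j: "j < n" and k: "k < n"
  shows "(\<Sum>l<n. a k l * p l * U j s l) = p k * (\<Sum>l\<in>D j. b k l * U j s l)"
proof -
  have "(\<Sum>l<n. a k l * p l * U j s l) = (\<Sum>l<n. p k * (b k l * U j s l))"
    using ppos[OF k] by (intro sum.cong) (auto simp: b_def)
  also have "\<dots> = p k * (\<Sum>l<n. b k l * U j s l)" by (simp add: sum_distrib_left)
  also have "(\<Sum>l<n. b k l * U j s l) = (\<Sum>l\<in>D j. b k l * U j s l)"
    using sum_split_j[OF j, of "\<lambda>l. b k l * U j s l"] by (simp add: U_j)
  finally show ?thesis .
qed

lemma Ty:
  assumes s: "s > 0" and j: "j < n"
  shows "Tm s *\<^sub>v yv j s = unit_vec n j"
proof (rule eq_vecI)
  show "dim_vec (Tm s *\<^sub>v yv j s) = dim_vec (unit_vec n j :: real Matrix.vec)" using carrier_matD(1)[OF Tm_carrier[of s]] by simp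
  fix k assume "k < dim_vec (unit_vec n j :: real Matrix.vec)"
  hence k: "k < n" by simp
  have yc: "yv j s \<in> carrier_vec n" unfolding yv_def by simp
  define c where "c = cc j s"
  define u where "u = U j s"
  define S where "S = (\<Sum>l<n. a k l * p l * u l)"
  have ls: "lam + s > 0" using lam_pos s by simp
  have sumy: "(\<Sum>l<n. a k l * yv j s $ l) = c * (lam * p k - s * S)"
  proof -
    have "(\<Sum>l<n. a k l * yv j s $ l) = (\<Sum>l<n. c * (a k l * p l) - c * s * (a k l * p l * u l))"
      unfolding yv_def c_def u_def by (intro sum.cong) (auto simp: algebra_simps)
    also have "\<dots> = c * (\<Sum>l<n. a k l * p l) - c * s * S"
      unfolding S_def by (simp add: sum_subtractf sum_distrib_left)
    finally show ?thesis using pev[OF k] by (simp add: algebra_simps)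
  qed
  have main: "(Tm s *\<^sub>v yv j s) $ k = c * p k * (1 - s * u k) - c * (lam * p k - s * S) / (lam + s)"
    using Tm_vec[OF yc k] sumy k unfolding yv_def c_def u_def by simp
  show "(Tm s *\<^sub>v yv j s) $ k = unit_vec n j $ k"
  proof (cases "k = j")
    case True
    have uj: "u k = 0" unfolding u_def True by (simp add: U_j)
    have pos: "p j + S > 0" using S_nonneg[OF j less_imp_le[OF s]] ppos[OF j] True unfolding S_def u_def by simp
    have "(Tm s *\<^sub>v yv j s) $ k = c * s * (p j + S) / (lam + s)"
      unfolding main uj using ls True by (simp add: field_simps)
    also have "\<dots> = 1" unfolding c_def cc_def S_def u_def True using pos ls s
      by (simp add: S_def u_def True)
    finally show ?thesis using True j by simp
  next
    case False
    hence kD: "k \<in> D j" using k unfolding D_def by auto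
    have L: "(lam + s) * u k - (\<Sum>l\<in>D j. b k l * u l) = 1"
      using sol_eq[OF j _ kD, of s "\<lambda>_. 1"] s unfolding Lop_def u_def U_def by simp
    have "S = p k * ((lam + s) * u k - 1)" unfolding S_def u_def bsum_U[OF j k] using L unfolding u_def by simp
    hence e: "p k + S - (lam + s) * (p k * u k) = 0" by (simp add: algebra_simps)
    have "(Tm s *\<^sub>v yv j s) $ k = c * s * (p k + S - (lam + s) * (p k * u k)) / (lam + s)"
      unfolding main using ls by (simp add: field_simps)
    hence "(Tm s *\<^sub>v yv j s) $ k = 0" unfolding e by simp
    thus ?thesis using False k j by simp
  qed
qed

lemma R_entry:
  assumes s: "s > 0" and j: "j < n" and i: "i < n"
  shows "Rm s $$ (i, j) = cc j s * p i * (1 - s * U j s i)"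
  using Rm_col[OF s j i _ Ty[OF s j]] i unfolding yv_def by simp

end

lemma ln_ratio_lim:
  fixes c :: real assumes c: "c > 0"
  shows "((\<lambda>x. ln (exp 1 + x powr c) / ln x) \<longlongrightarrow> c) at_top"
  using c by real_asymp

lemma theta_lim:
  assumes n: "n \<ge> 1"
  shows "((\<lambda>x. theta n x / x) \<longlongrightarrow> 2 / real n) at_top"
proof -
  have c: "2 / real n > 0" using n by simp
  have "((\<lambda>x. ln (exp 1 + x powr (2 / real n)) / ln x * (1 - 1 / x)) \<longlongrightarrow> 2 / real n * (1 - 0)) at_top"
  proof (rule tendsto_mult[OF ln_ratio_lim[OF c]])
    show "((\<lambda>x. 1 - 1 / x :: real) \<longlongrightarrow> 1 - 0) at_top" by real_asymp
  qed
  hence lim: "((\<lambda>x. ln (exp 1 + x powr (2 / real n)) / ln x * (1 - 1 / x)) \<longlongrightarrow> 2 / real n) at_top" by simp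
  show ?thesis
  proof (rule Lim_transform_eventually[OF lim])
    show "\<forall>\<^sub>F x in at_top. ln (exp 1 + x powr (2 / real n)) / ln x * (1 - 1 / x) = theta n x / x"
      using eventually_gt_at_top[of 1]
    proof eventually_elim
      case (elim x)
      thus ?case unfolding theta_def by (simp add: field_simps)
    qed
  qed
qed

lemma log_lim:
  fixes f :: "real \<Rightarrow> real"
  assumes f: "(f \<longlongrightarrow> f0) at_top" and fnn: "\<forall>\<^sub>F x in at_top. f x \<ge> 0"
  shows "((\<lambda>x. x * ln (1 - f x / x)) \<longlongrightarrow> - f0) at_top"
proof -
  have i: "((\<lambda>x. 1 / x :: real) \<longlongrightarrow> 0) at_top" by real_asymp
  have q: "((\<lambda>x. f x / x) \<longlongrightarrow> 0) at_top"
    using tendsto_mult[OF f i] by simp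
  have ev_half: "\<forall>\<^sub>F x in at_top. f x / x \<le> 1/2"
    using order_tendstoD(2)[OF q, of "1/2"] by (auto elim: eventually_mono)
  have up: "((\<lambda>x. - f x) \<longlongrightarrow> - f0) at_top" using f by (intro tendsto_intros)
  have lo: "((\<lambda>x. - f x - 2 * (f x * (f x / x))) \<longlongrightarrow> - f0) at_top"
    using tendsto_diff[OF up tendsto_mult[OF tendsto_const tendsto_mult[OF f q]], of 2] by simp
  show ?thesis
  proof (rule tendsto_sandwich[OF _ _ lo up])
    show "\<forall>\<^sub>F x in at_top. - f x - 2 * (f x * (f x / x)) \<le> x * ln (1 - f x / x)"
      using eventually_gt_at_top[of 0] fnn ev_half
    proof eventually_elim
      case (elim x)
      have "- (f x / x) - 2 * (f x / x)\<^sup>2 \<le> ln (1 - f x / x)"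
        by (rule ln_one_minus_pos_lower_bound) (use elim in auto)
      hence "x * (- (f x / x) - 2 * (f x / x)\<^sup>2) \<le> x * ln (1 - f x / x)"
        using elim by (intro mult_left_mono) auto
      moreover have "x * (- (f x / x) - 2 * (f x / x)\<^sup>2) = - f x - 2 * (f x * (f x / x))"
        using elim by (simp add: field_simps power2_eq_square)
      ultimately show ?case by linarith
    qed
    show "\<forall>\<^sub>F x in at_top. x * ln (1 - f x / x) \<le> - f x"
      using eventually_gt_at_top[of 0] fnn ev_half
    proof eventually_elim
      case (elim x)
      have "ln (1 - f x / x) \<le> (1 - f x / x) - 1" by (rule ln_le_minus_one) (use elim in auto)
      hence "x * ln (1 - f x / x) \<le> x * (- (f x / x))" using elim by (intro mult_left_mono) auto
      thus ?case using elim by simp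
    qed
  qed
qed

lemma mat_mult_sum:
  assumes "X \<in> carrier_mat n m" "Y \<in> carrier_mat m q" "k < n" "l < q"
  shows "(X * Y) $$ (k, l) = (\<Sum>r<m. X $$ (k, r) * Y $$ (r, l))"
  using assms by (auto simp: scalar_prod_def atLeast0LessThan intro!: sum.cong)

definition aw :: "'e set \<Rightarrow> ('e \<Rightarrow> nat set) \<Rightarrow> ('e \<Rightarrow> real) \<Rightarrow> nat \<Rightarrow> nat \<Rightarrow> real" where
  "aw E ends w k l = (\<Sum>e\<in>{e\<in>E. ends e = {k, l}}. w e)"

lemma graph_symirr:
  assumes n: "n \<ge> 2" and G: "wmultigraph n E ends w" and C: "connected_graph n E ends"
  shows "symirr n (aw E ends w)"
proof
  show "n \<ge> 2" by (rule n)
  show "aw E ends w k l = aw E ends w l k" for k l unfolding aw_def by (simp add: insert_commute)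
  have fin: "finite E" and wpos: "\<And>e. e \<in> E \<Longrightarrow> w e > 0" and ends: "\<And>e. e \<in> E \<Longrightarrow> ends e \<subseteq> {0..<n}"
    using G unfolding wmultigraph_def by auto
  show nn: "aw E ends w k l \<ge> 0" for k l unfolding aw_def using wpos by (intro sum_nonneg) (auto intro: less_imp_le)
  fix Z assume Zs: "Z \<subseteq> {..<n}" and Zne: "Z \<noteq> {}"
    and cl: "\<And>k l. k \<in> Z \<Longrightarrow> l < n \<Longrightarrow> aw E ends w k l > 0 \<Longrightarrow> l \<in> Z"
  obtain z0 where z0: "z0 \<in> Z" using Zne by auto
  have z0n: "z0 < n" using z0 Zs by auto
  have "y \<in> Z" if "(z0, y) \<in> (adjacent E ends)\<^sup>*" for y
    using that
  proof (induction rule: rtrancl_induct)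
    case base thus ?case using z0 .
  next
    case (step y y')
    from step(2) obtain e where e: "e \<in> E" "ends e = {y, y'}" unfolding adjacent_def by auto
    have y'n: "y' < n" using ends[OF e(1)] e(2) by auto
    have "w e \<le> aw E ends w y y'" unfolding aw_def
      using e fin wpos by (intro member_le_sum) (auto intro: less_imp_le)
    hence "aw E ends w y y' > 0" using wpos[OF e(1)] by simp
    thus ?case using cl[OF step(3) y'n] by simp
  qed
  hence "l \<in> Z" if "l < n" for l using C z0n that unfolding connected_graph_def by auto
  thus "Z = {..<n}" using Zs by auto
qed

lemma wadj_props:
  "wadj n E ends w \<in> carrier_mat n n"
  "k < n \<Longrightarrow> l < n \<Longrightarrow> wadj n E ends w $$ (k, l) = aw E ends w k l"
  unfolding wadj_def aw_def by auto


context perron_mat begin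

lemma rho_eq: "rho Am = lam"
proof -
  let ?C = "map_mat complex_of_real Am"
  have C: "?C \<in> carrier_mat n n" using Am_carrier by simp
  have n0: "n > 0" using n2 by simp
  note SR = spectral_radius_mem_max[OF C n0]
  have le: "spectral_radius ?C \<le> lam"
  proof -
    obtain \<mu> where mu: "\<mu> \<in> spectrum ?C" "spectral_radius ?C = norm \<mu>" using SR(1) by auto
    then obtain v where ev: "eigenvector ?C v \<mu>" unfolding spectrum_def eigenvalue_def by auto
    hence v: "v \<in> carrier_vec n" "v \<noteq> 0\<^sub>v n" "?C *\<^sub>v v = \<mu> \<cdot>\<^sub>v v"
      unfolding eigenvector_def using C by auto
    have "\<exists>k<n. v $ k \<noteq> 0"
    proof (rule ccontr)
      assume "\<not> (\<exists>k<n. v $ k \<noteq> 0)"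
      hence "v = 0\<^sub>v n" using v(1) by (intro eq_vecI) auto
      thus False using v(2) by simp
    qed
    then obtain k0 where k0: "k0 < n" "v $ k0 \<noteq> 0" by blast
    have evk: "(\<Sum>l<n. of_real (a k l) * v $ l) = \<mu> * v $ k" if k: "k < n" for k
    proof -
      have "(?C *\<^sub>v v) $ k = (\<Sum>l<n. ?C $$ (k, l) * v $ l)" by (rule mat_vec_sum[OF C v(1) k])
      also have "\<dots> = (\<Sum>l<n. of_real (a k l) * v $ l)"
        using k Am_carrier Am_entry by (intro sum.cong) auto
      finally show ?thesis using v(3) k v(1) by simp
    qed
    have "norm \<mu> \<le> lam" by (rule spec_bound[of "\<lambda>l. v $ l" \<mu> k0]) (use evk k0 in auto)
    thus ?thesis using mu by simp
  qed
  have ge: "lam \<le> spectral_radius ?C"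
  proof -
    define v where "v = Matrix.vec n (\<lambda>k. complex_of_real (p k))"
    have vc: "v \<in> carrier_vec n" unfolding v_def by simp
    have "v \<noteq> 0\<^sub>v n"
    proof
      assume "v = 0\<^sub>v n"
      hence "v $ 0 = 0" using n0 by simp
      thus False using ppos[OF n0] unfolding v_def using n0 by simp
    qed
    moreover have "?C *\<^sub>v v = complex_of_real lam \<cdot>\<^sub>v v"
    proof (rule eq_vecI)
      fix k assume "k < dim_vec (complex_of_real lam \<cdot>\<^sub>v v)"
      hence k: "k < n" unfolding v_def by simp
      have "(?C *\<^sub>v v) $ k = (\<Sum>l<n. ?C $$ (k, l) * v $ l)" by (rule mat_vec_sum[OF C vc k])
      also have "\<dots> = (\<Sum>l<n. complex_of_real (a k l * p l))"
        using k Am_carrier Am_entry unfolding v_def by (intro sum.cong) auto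
      also have "\<dots> = complex_of_real (lam * p k)" using pev[OF k] by (simp only: of_real_sum[symmetric])
      finally show "(?C *\<^sub>v v) $ k = (complex_of_real lam \<cdot>\<^sub>v v) $ k" using k unfolding v_def by simp
    qed (use C in \<open>simp add: v_def\<close>)
    ultimately have "eigenvector ?C v (complex_of_real lam)" unfolding eigenvector_def using vc C by auto
    hence "complex_of_real lam \<in> spectrum ?C" unfolding spectrum_def eigenvalue_def by auto
    hence "norm (complex_of_real lam) \<in> norm ` spectrum ?C" by (rule imageI)
    hence "norm (complex_of_real lam) \<le> spectral_radius ?C" by (rule SR(2))
    thus ?thesis using lam_pos by simp
  qed
  show ?thesis unfolding rho_def using le ge by simp
qed

lemma perron_vec_eq:
  assumes psum: "(\<Sum>k<n. p k) = 1"
  shows "perron_vec Am = Matrix.vec n p"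
proof -
  have dA: "dim_row Am = n" using Am_carrier by simp
  have eqv: "Am *\<^sub>v Matrix.vec n p = lam \<cdot>\<^sub>v Matrix.vec n p"
  proof (rule eq_vecI)
    fix k assume "k < dim_vec (lam \<cdot>\<^sub>v Matrix.vec n p)"
    hence k: "k < n" by simp
    have "(Am *\<^sub>v Matrix.vec n p) $ k = (\<Sum>l<n. Am $$ (k, l) * Matrix.vec n p $ l)"
      by (rule mat_vec_sum[OF Am_carrier _ k]) simp
    also have "\<dots> = (\<Sum>l<n. a k l * p l)" using k Am_entry by (intro sum.cong) auto
    finally show "(Am *\<^sub>v Matrix.vec n p) $ k = (lam \<cdot>\<^sub>v Matrix.vec n p) $ k" using pev[OF k] k by simp
  qed (use Am_carrier in simp)
  show ?thesis unfolding perron_vec_def dA rho_eq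
  proof (rule the_equality)
    show "Matrix.vec n p \<in> carrier_vec n \<and> (\<forall>i<n. 0 < Matrix.vec n p $ i) \<and>
      Am *\<^sub>v Matrix.vec n p = lam \<cdot>\<^sub>v Matrix.vec n p \<and> (\<Sum>i<n. Matrix.vec n p $ i) = 1"
      using ppos eqv psum by simp
    fix p' assume H: "p' \<in> carrier_vec n \<and> (\<forall>i<n. 0 < p' $ i) \<and> Am *\<^sub>v p' = lam \<cdot>\<^sub>v p' \<and> (\<Sum>i<n. p' $ i) = 1"
    have ev': "(\<Sum>l<n. a k l * p' $ l) = lam * p' $ k" if k: "k < n" for k
    proof -
      have "(Am *\<^sub>v p') $ k = (\<Sum>l<n. Am $$ (k, l) * p' $ l)" by (rule mat_vec_sum[OF Am_carrier _ k]) (use H in simp)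
      also have "\<dots> = (\<Sum>l<n. a k l * p' $ l)" using k Am_entry by (intro sum.cong) auto
      moreover have "dim_vec p' = n" using H by auto
      hence "(lam \<cdot>\<^sub>v p') $ k = lam * p' $ k" using k by simp
      ultimately show ?thesis using H by auto
    qed
    obtain c where c: "\<forall>k<n. p' $ k = c * p k" using uniq[of "\<lambda>k. p' $ k"] H ev' by blast
    have "1 = (\<Sum>k<n. p' $ k)" using H by simp
    also have "\<dots> = c * (\<Sum>k<n. p k)" using c by (simp add: sum_distrib_left)
    finally have c1: "c = 1" using psum by simp
    show "p' = Matrix.vec n p" using H c c1 by (intro eq_vecI) auto
  qed
qed

definition Pm :: "real mat" where "Pm = diag_of_vec (Matrix.vec n p)"
definition Pinv :: "real mat" where "Pinv = Matrix.mat n n (\<lambda>(k, l). if k = l then 1 / p k else 0)"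

lemma Pm_carrier: "Pm \<in> carrier_mat n n" unfolding Pm_def diag_of_vec_def by simp
lemma Pm_entry: "k < n \<Longrightarrow> l < n \<Longrightarrow> Pm $$ (k, l) = (if k = l then p k else 0)"
  unfolding Pm_def diag_of_vec_def by simp
lemma Pinv_carrier: "Pinv \<in> carrier_mat n n" unfolding Pinv_def by simp

lemma minv_Pm: "minv Pm = Pinv"
proof -
  have PPi: "Pm * Pinv = 1\<^sub>m n"
  proof (rule eq_matI)
    fix k l assume "k < dim_row (1\<^sub>m n :: real mat)" "l < dim_col (1\<^sub>m n :: real mat)"
    hence k: "k < n" and l: "l < n" by auto
    have "(Pm * Pinv) $$ (k, l) = (\<Sum>r<n. Pm $$ (k, r) * Pinv $$ (r, l))"
      by (rule mat_mult_sum[OF Pm_carrier Pinv_carrier k l])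
    also have "\<dots> = (\<Sum>r<n. if r = k then p k * (if k = l then 1 / p k else 0) else 0)"
      using k l by (intro sum.cong) (auto simp: Pm_entry Pinv_def)
    also have "\<dots> = p k * (if k = l then 1 / p k else 0)" using k by (simp add: sum.delta)
    also have "\<dots> = (if k = l then 1 else 0)" using ppos[OF k] by (cases "k = l") auto
    finally show "(Pm * Pinv) $$ (k, l) = 1\<^sub>m n $$ (k, l)" using k l by simp
  qed (use Pm_carrier Pinv_carrier in auto)
  have PiP: "Pinv * Pm = 1\<^sub>m n" by (rule mat_mult_left_right_inverse[OF Pm_carrier Pinv_carrier PPi])
  have "Pm * minv Pm = 1\<^sub>m n \<and> minv Pm * Pm = 1\<^sub>m n \<and> minv Pm \<in> carrier_mat n n"
  proof (rule minv_kernel[OF Pm_carrier])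
    fix v :: "real Matrix.vec" assume v: "v \<in> carrier_vec n" and Pv: "Pm *\<^sub>v v = 0\<^sub>v n"
    have "v = (Pinv * Pm) *\<^sub>v v" using PiP v by simp
    also have "\<dots> = Pinv *\<^sub>v (Pm *\<^sub>v v)" using assoc_mult_mat_vec[OF Pinv_carrier Pm_carrier v] .
    also have "\<dots> = 0\<^sub>v n" unfolding Pv using Pinv_carrier
      by (intro eq_vecI) (auto simp: scalar_prod_def)
    finally show "v = 0\<^sub>v n" .
  qed
  hence MP: "minv Pm * Pm = 1\<^sub>m n" and Mc: "minv Pm \<in> carrier_mat n n" by auto
  have "minv Pm = minv Pm * (Pm * Pinv)" unfolding PPi using Mc by simp
  also have "\<dots> = (minv Pm * Pm) * Pinv" using Mc Pm_carrier Pinv_carrier by (simp add: assoc_mult_mat)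
  also have "\<dots> = Pinv" unfolding MP using Pinv_carrier by simp
  finally show ?thesis .
qed

definition Bm :: "real mat" where "Bm = minv Pm * Am * Pm"

lemma Bm_carrier: "Bm \<in> carrier_mat n n"
  unfolding Bm_def minv_Pm using Pinv_carrier Am_carrier Pm_carrier by auto

lemma Bm_entry:
  assumes k: "k < n" and l: "l < n"
  shows "Bm $$ (k, l) = b k l"
proof -
  have PA: "Pinv * Am \<in> carrier_mat n n" using Pinv_carrier Am_carrier by auto
  have e1: "(Pinv * Am) $$ (k, r) = a k r / p k" if r: "r < n" for r
  proof -
    have "(Pinv * Am) $$ (k, r) = (\<Sum>m<n. Pinv $$ (k, m) * Am $$ (m, r))"
      by (rule mat_mult_sum[OF Pinv_carrier Am_carrier k r])
    also have "\<dots> = (\<Sum>m<n. if m = k then a k r / p k else 0)"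
      using k r Am_entry by (intro sum.cong) (auto simp: Pinv_def)
    finally show ?thesis using k by (simp add: sum.delta)
  qed
  have "Bm $$ (k, l) = (\<Sum>r<n. (Pinv * Am) $$ (k, r) * Pm $$ (r, l))"
    unfolding Bm_def minv_Pm by (rule mat_mult_sum[OF PA Pm_carrier k l])
  also have "\<dots> = (\<Sum>r<n. if r = l then a k l / p k * p l else 0)"
    using l by (intro sum.cong) (auto simp: e1 Pm_entry)
  also have "\<dots> = b k l" using l by (simp add: sum.delta b_def)
  finally show ?thesis .
qed

lemma row_inv_del_sum_eq:
  assumes i: "i < n" and j: "j < n" and ij: "i \<noteq> j"
  shows "row_inv_del_sum Bm lam j i = U j 0 i"
proof -
  have dB: "dim_row Bm = n" and dBc: "dim_col Bm = n" using carrier_matD[OF Bm_carrier] by auto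
  have MD: "mat_delete (lam \<cdot>\<^sub>m 1\<^sub>m n - Bm) j j = Nmat j 0"
  proof (rule eq_matI)
    fix x y assume "x < dim_row (Nmat j 0)" "y < dim_col (Nmat j 0)"
    hence x: "x < n - 1" and y: "y < n - 1" unfolding Nmat_def by auto
    have xi: "insert_index j x < n" "insert_index j y < n" using insert_index_bound[OF j] x y by auto
    have eqi: "insert_index j x = insert_index j y \<longleftrightarrow> x = y"
      by (rule inj_on_eq_iff[OF insert_index_inj_on[of j UNIV]]) auto
    have "mat_delete (lam \<cdot>\<^sub>m 1\<^sub>m n - Bm) j j $$ (x, y) = (lam \<cdot>\<^sub>m 1\<^sub>m n - Bm) $$ (insert_index j x, insert_index j y)"
      unfolding mat_delete_def insert_index_def using x y dB dBc by simp
    also have "\<dots> = lam * (if insert_index j x = insert_index j y then 1 else 0) - b (insert_index j x) (insert_index j y)"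
      using xi dB dBc Bm_entry by simp
    finally show "mat_delete (lam \<cdot>\<^sub>m 1\<^sub>m n - Bm) j j $$ (x, y) = Nmat j 0 $$ (x, y)"
      unfolding Nmat_def using x y eqi by simp
  qed (use dB dBc in \<open>auto simp: Nmat_def\<close>)
  define M where "M = minv (Nmat j 0)"
  have Mc: "M \<in> carrier_mat (n-1) (n-1)" using Nmat_inv[OF j, of 0] unfolding M_def by simp
  have di: "delete_index j i < n - 1" using delete_index_bound[OF j i ij] .
  have "row_inv_del_sum Bm lam j i = (\<Sum>k<n-1. M $$ (delete_index j i, k))"
    unfolding row_inv_del_sum_def Let_def dB MD M_def by simp
  also have "\<dots> = (M *\<^sub>v Matrix.vec (n-1) (\<lambda>_. 1)) $ delete_index j i"
    using mat_vec_sum[OF Mc _ di, of "Matrix.vec (n-1) (\<lambda>_. 1)"] by simp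
  also have "\<dots> = U j 0 i" unfolding U_def sol_def lift_def M_def using ij by simp
  finally show ?thesis .
qed

lemma resolvent_eq: "x > 0 \<Longrightarrow> resolvent Am x = Rm (1 / x)"
  unfolding resolvent_def Let_def Rm_def Tm_def rho_eq using Am_carrier by simp

lemma bracket_eq:
  assumes s: "s > 0" and i: "i < n" and j: "j < n" and ij: "i \<noteq> j"
  and X: "1 - s * U j s i > 0" and Y: "1 - s * U i s j > 0"
  shows "(ln (Rm s $$ (i, i)) + ln (Rm s $$ (j, j))) / 2 - ln (Rm s $$ (i, j))
       = - (ln (1 - s * U j s i) + ln (1 - s * U i s j)) / 2"
proof -
  have ci: "cc i s > 0" and cj: "cc j s > 0" using cc_pos s i j by auto
  have pi: "p i > 0" and pj: "p j > 0" using ppos i j by auto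
  have Rii: "Rm s $$ (i, i) = cc i s * p i" using R_entry[OF s i i] by (simp add: U_j)
  have Rjj: "Rm s $$ (j, j) = cc j s * p j" using R_entry[OF s j j] by (simp add: U_j)
  have Rij: "Rm s $$ (i, j) = cc j s * p i * (1 - s * U j s i)" using R_entry[OF s j i] .
  have Rji: "Rm s $$ (i, j) = cc i s * p j * (1 - s * U i s j)"
    using R_entry[OF s i j] Rm_sym[OF s i j] by simp
  have l1: "ln (Rm s $$ (i, j)) = ln (cc j s) + ln (p i) + ln (1 - s * U j s i)"
    unfolding Rij using ci cj pi pj X by (simp add: ln_mult)
  have l2: "ln (Rm s $$ (i, j)) = ln (cc i s) + ln (p j) + ln (1 - s * U i s j)"
    unfolding Rji using ci cj pi pj Y by (simp add: ln_mult)
  have l3: "ln (Rm s $$ (i, i)) = ln (cc i s) + ln (p i)" unfolding Rii using ci pi by (simp add: ln_mult)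
  have l4: "ln (Rm s $$ (j, j)) = ln (cc j s) + ln (p j)" unfolding Rjj using cj pj by (simp add: ln_mult)
  have "(ln (cc i s) + ln (p i) + (ln (cc j s) + ln (p j))) - 2 * ln (Rm s $$ (i, j))
      = - (ln (1 - s * U j s i) + ln (1 - s * U i s j))" using l1 l2 by linarith
  thus ?thesis unfolding l3 l4 by (simp add: field_simps)
qed

lemma final_limit:
  assumes i: "i < n" and j: "j < n" and ij: "i \<noteq> j"
  shows "((\<lambda>x. dW Am x i j) \<longlongrightarrow> (U j 0 i + U i 0 j) / real n) at_top"
proof -
  have iD: "i \<in> D j" and jD: "j \<in> D i" using i j ij unfolding D_def by auto
  define f where "f = (\<lambda>x. U j (1 / x) i)"
  define g where "g = (\<lambda>x. U i (1 / x) j)"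
  have f: "(f \<longlongrightarrow> U j 0 i) at_top" unfolding f_def by (rule U_tendsto[OF j iD])
  have g: "(g \<longlongrightarrow> U i 0 j) at_top" unfolding g_def by (rule U_tendsto[OF i jD])
  have fnn: "\<forall>\<^sub>F x in at_top. f x \<ge> 0" using eventually_gt_at_top[of 0]
    by eventually_elim (use U_nonneg[OF j _ iD] in \<open>simp add: f_def\<close>)
  have gnn: "\<forall>\<^sub>F x in at_top. g x \<ge> 0" using eventually_gt_at_top[of 0]
    by eventually_elim (use U_nonneg[OF i _ jD] in \<open>simp add: g_def\<close>)
  have inv0: "((\<lambda>x. 1 / x :: real) \<longlongrightarrow> 0) at_top" by real_asymp
  have fx: "((\<lambda>x. f x / x) \<longlongrightarrow> 0) at_top" using tendsto_mult[OF f inv0] by simp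
  have gx: "((\<lambda>x. g x / x) \<longlongrightarrow> 0) at_top" using tendsto_mult[OF g inv0] by simp
  have fx1: "\<forall>\<^sub>F x in at_top. f x / x < 1" using order_tendstoD(2)[OF fx, of 1] by simp
  have gx1: "\<forall>\<^sub>F x in at_top. g x / x < 1" using order_tendstoD(2)[OF gx, of 1] by simp
  have n1: "n \<ge> 1" using n2 by simp
  have lim: "((\<lambda>x. (theta n x / x) * (- (x * ln (1 - f x / x) + x * ln (1 - g x / x)) / 2))
      \<longlongrightarrow> (2 / real n) * (- ((- U j 0 i) + (- U i 0 j)) / 2)) at_top"
  proof (rule tendsto_mult[OF theta_lim[OF n1]])
    show "((\<lambda>x. - (x * ln (1 - f x / x) + x * ln (1 - g x / x)) / 2) \<longlongrightarrow> - ((- U j 0 i) + (- U i 0 j)) / 2) at_top"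
      by (rule tendsto_divide[OF tendsto_minus[OF tendsto_add[OF log_lim[OF f fnn] log_lim[OF g gnn]]] tendsto_const]) simp
  qed
  have eq: "\<forall>\<^sub>F x in at_top. (theta n x / x) * (- (x * ln (1 - f x / x) + x * ln (1 - g x / x)) / 2) = dW Am x i j"
    using eventually_gt_at_top[of 0] fx1 gx1
  proof eventually_elim
    case (elim x)
    have s: "1 / x > 0" using elim by simp
    have X: "1 - 1 / x * U j (1 / x) i > 0" using elim(2) unfolding f_def by simp
    have Y: "1 - 1 / x * U i (1 / x) j > 0" using elim(3) unfolding g_def by simp
    have "dW Am x i j = theta n x * (- (ln (1 - 1 / x * U j (1 / x) i) + ln (1 - 1 / x * U i (1 / x) j)) / 2)"
      unfolding dW_def Let_def resolvent_eq[OF elim(1)] bracket_eq[OF s i j ij X Y]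
      using Am_carrier by simp
    moreover have ef: "f x / x = 1 / x * U j (1 / x) i" and eg: "g x / x = 1 / x * U i (1 / x) j"
      unfolding f_def g_def by simp_all
    moreover have AB: "\<And>A B. (theta n x / x) * (- (x * A + x * B) / 2) = theta n x * (- (A + B) / 2)"
      using elim(1) by (simp add: field_simps)
    ultimately show ?case unfolding ef eg AB by simp
  qed
  have "(2 / real n) * (- ((- U j 0 i) + (- U i 0 j)) / 2) = (U j 0 i + U i 0 j) / real n"
  proof -
    have "real n \<noteq> 0" using n2 by simp
    thus ?thesis by (simp add: field_simps)
  qed
  thus ?thesis using Lim_transform_eventually[OF lim eq] by simp
qed

end

theorem corollary2:
  fixes n :: nat and E :: "'e set" and ends :: "'e \<Rightarrow> nat set" and w :: "'e \<Rightarrow> real"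
    and i j :: nat
  assumes "n \<ge> 2"
    and "wmultigraph n E ends w"
    and "connected_graph n E ends"
    and "i < n" and "j < n" and "i \<noteq> j"
  shows "let A = wadj n E ends w; p = perron_vec A; P = diag_of_vec p;
             B = minv P * A * P
         in ((\<lambda>\<alpha>. dW A \<alpha> i j) \<longlongrightarrow>
               (row_inv_del_sum B (rho A) j i + row_inv_del_sum B (rho A) i j) / real n) at_top"
proof -
  define A where "A = wadj n E ends w"
  define a where "a = aw E ends w"
  have SI: "symirr n a" unfolding a_def by (rule graph_symirr[OF assms(1-3)])
  obtain q lam where qpos: "\<forall>k<n. q k > 0" and qev: "\<forall>k<n. (\<Sum>l<n. a k l * q l) = lam * q k"
    using symirr.perron_exists[OF SI] by blast
  define Sq where "Sq = (\<Sum>l<n. q l)"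
  have Sq: "Sq > 0" unfolding Sq_def using qpos assms(1) by (intro sum_pos) (auto simp: lessThan_empty_iff)
  define p where "p = (\<lambda>k. q k / Sq)"
  have psum: "(\<Sum>k<n. p k) = 1" unfolding p_def using Sq by (simp add: sum_divide_distrib[symmetric] Sq_def)
  interpret PM: perron_mat n a p lam A
  proof (unfold_locales)
    show "n \<ge> 2" using assms(1) .
    show "\<And>k l. a k l = a l k" "\<And>k l. a k l \<ge> 0" using SI unfolding symirr_def by auto
    show "\<And>Z. Z \<subseteq> {..<n} \<Longrightarrow> Z \<noteq> {} \<Longrightarrow> (\<And>k l. k \<in> Z \<Longrightarrow> l < n \<Longrightarrow> 0 < a k l \<Longrightarrow> l \<in> Z) \<Longrightarrow> Z = {..<n}"
      using symirr.irr[OF SI] by blast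
    show "\<And>k. k < n \<Longrightarrow> p k > 0" unfolding p_def using qpos Sq by simp
    show "\<And>k. k < n \<Longrightarrow> (\<Sum>l<n. a k l * p l) = lam * p k"
    proof -
      fix k assume k: "k < n"
      have "(\<Sum>l<n. a k l * p l) = (\<Sum>l<n. a k l * q l) / Sq" unfolding p_def by (simp add: sum_divide_distrib)
      thus "(\<Sum>l<n. a k l * p l) = lam * p k" using qev k unfolding p_def by simp
    qed
    show "A \<in> carrier_mat n n" unfolding A_def by (rule wadj_props(1))
    show "\<And>k l. k < n \<Longrightarrow> l < n \<Longrightarrow> A $$ (k, l) = a k l" unfolding A_def a_def by (rule wadj_props(2))
  qed
  have pv: "perron_vec A = Matrix.vec n p" by (rule PM.perron_vec_eq[OF psum])
  have B: "minv (diag_of_vec (perron_vec A)) * A * diag_of_vec (perron_vec A) = PM.Bm"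
    unfolding PM.Bm_def PM.Pm_def pv ..
  show ?thesis
    unfolding Let_def A_def[symmetric] B PM.rho_eq
    using PM.final_limit[OF assms(4-6)] PM.row_inv_del_sum_eq[OF assms(4-6)]
      PM.row_inv_del_sum_eq[OF assms(5,4) assms(6)[symmetric]] by simp
qed

end
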